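(* Let $A$ be a unital separable simple $C^*$-algebra\ with real rank zero and stable rank one, and let $\alpha\in\mathrm{Aut}(A)$. Suppose there is a subgroup $G\subset K_0(A)$ such that $\rho_A(G)$ is dense in $\rho_A(K_0(A))$ and $\alpha_{*0}|_G=\mathrm{id}_G$. Then $\tau(\alpha(a))=\tau(a)$ for all $a\in A$ and all tracial states $\tau$ of $A$.
   Context: $T(A)$ is the tracial state space of $A$, $\mathrm{Aff}(T(A))$ the real continuous affine functions on $T(A)$, and $\rho_A:K_0(A)\to\mathrm{Aff}(T(A))$ is given by $\rho_A([p])(\tau)=\tau(p)$. $\alpha_{*0}$ is the homomorphism induced by $\alpha$ on $K_0(A)$. *)

theory Defs
  imports "HOL-Analysis.Analysis"
begin

class unital_cstar_algebra = real_normed_algebra_1 + banach +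
  fixes cs_scale :: "complex \<Rightarrow> 'a \<Rightarrow> 'a"
    and cs_star :: "'a \<Rightarrow> 'a"
  assumes cs_scale_of_real: "cs_scale (complex_of_real r) a = scaleR r a"
    and cs_scale_add_right: "cs_scale c (a + b) = cs_scale c a + cs_scale c b"
    and cs_scale_add_left: "cs_scale (c + d) a = cs_scale c a + cs_scale d a"
    and cs_scale_scale: "cs_scale c (cs_scale d a) = cs_scale (c * d) a"
    and norm_cs_scale: "norm (cs_scale c a) = cmod c * norm a"
    and mult_cs_scale_left: "cs_scale c a * b = cs_scale c (a * b)"
    and mult_cs_scale_right: "a * cs_scale c b = cs_scale c (a * b)"
    and cs_star_star: "cs_star (cs_star a) = a"
    and cs_star_add: "cs_star (a + b) = cs_star a + cs_star b"
    and cs_star_mult: "cs_star (a * b) = cs_star b * cs_star a"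
    and cs_star_scale: "cs_star (cs_scale c a) = cs_scale (cnj c) (cs_star a)"
    and cstar_identity: "norm (cs_star a * a) = (norm a)\<^sup>2"

definition cs_invertible :: "'a::unital_cstar_algebra \<Rightarrow> bool" where
  "cs_invertible a \<longleftrightarrow> (\<exists>b. a * b = 1 \<and> b * a = 1)"

definition separable_cstar :: "'a::unital_cstar_algebra itself \<Rightarrow> bool" where
  "separable_cstar _ \<longleftrightarrow> (\<exists>D::'a set. countable D \<and> closure D = UNIV)"

definition closed_two_sided_ideal :: "'a::unital_cstar_algebra set \<Rightarrow> bool" where
  "closed_two_sided_ideal I \<longleftrightarrow> closed I \<and> 0 \<in> I
     \<and> (\<forall>a\<in>I. \<forall>b\<in>I. a + b \<in> I)
     \<and> (\<forall>a\<in>I. \<forall>c. cs_scale c a \<in> I)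
     \<and> (\<forall>a\<in>I. \<forall>x. x * a \<in> I \<and> a * x \<in> I)"

definition simple_cstar :: "'a::unital_cstar_algebra itself \<Rightarrow> bool" where
  "simple_cstar _ \<longleftrightarrow> (\<forall>I::'a set. closed_two_sided_ideal I \<longrightarrow> I = {0} \<or> I = UNIV)"

definition real_rank_zero :: "'a::unital_cstar_algebra itself \<Rightarrow> bool" where
  "real_rank_zero _ \<longleftrightarrow>
     {a::'a. cs_star a = a} \<subseteq> closure {a. cs_star a = a \<and> cs_invertible a}"

definition stable_rank_one :: "'a::unital_cstar_algebra itself \<Rightarrow> bool" where
  "stable_rank_one _ \<longleftrightarrow> closure {a::'a. cs_invertible a} = UNIV"

definition star_automorphism :: "('a::unital_cstar_algebra \<Rightarrow> 'a) \<Rightarrow> bool" where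
  "star_automorphism \<alpha> \<longleftrightarrow> bij \<alpha>
     \<and> (\<forall>a b. \<alpha> (a + b) = \<alpha> a + \<alpha> b)
     \<and> (\<forall>a b. \<alpha> (a * b) = \<alpha> a * \<alpha> b)
     \<and> (\<forall>c a. \<alpha> (cs_scale c a) = cs_scale c (\<alpha> a))
     \<and> (\<forall>a. \<alpha> (cs_star a) = cs_star (\<alpha> a))"

definition tracial_state :: "('a::unital_cstar_algebra \<Rightarrow> complex) \<Rightarrow> bool" where
  "tracial_state \<tau> \<longleftrightarrow>
     (\<forall>a b. \<tau> (a + b) = \<tau> a + \<tau> b)
     \<and> (\<forall>c a. \<tau> (cs_scale c a) = c * \<tau> a)
     \<and> (\<forall>a. Im (\<tau> (cs_star a * a)) = 0 \<and> Re (\<tau> (cs_star a * a)) \<ge> 0)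
     \<and> \<tau> 1 = 1
     \<and> (\<forall>a b. \<tau> (a * b) = \<tau> (b * a))"

text \<open>A matrix is a function \<open>nat \<Rightarrow> nat \<Rightarrow> 'a\<close>; an element of \<open>M_n(A)\<close> is a pair (n, p)
with p supported on \<open>{0..<n} \<times> {0..<n}\<close>.\<close>

type_synonym 'a pmat = "nat \<times> (nat \<Rightarrow> nat \<Rightarrow> 'a)"

definition mat_supp :: "nat \<Rightarrow> nat \<Rightarrow> (nat \<Rightarrow> nat \<Rightarrow> 'a::zero) \<Rightarrow> bool" where
  "mat_supp m n M \<longleftrightarrow> (\<forall>i j. (m \<le> i \<or> n \<le> j) \<longrightarrow> M i j = 0)"

definition mat_mul :: "nat \<Rightarrow> (nat \<Rightarrow> nat \<Rightarrow> 'a::{times,comm_monoid_add})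
    \<Rightarrow> (nat \<Rightarrow> nat \<Rightarrow> 'a) \<Rightarrow> (nat \<Rightarrow> nat \<Rightarrow> 'a)" where
  "mat_mul k M N = (\<lambda>i j. \<Sum>l<k. M i l * N l j)"

definition mat_adj :: "(nat \<Rightarrow> nat \<Rightarrow> 'a::unital_cstar_algebra) \<Rightarrow> (nat \<Rightarrow> nat \<Rightarrow> 'a)" where
  "mat_adj M = (\<lambda>i j. cs_star (M j i))"

definition is_proj :: "'a::unital_cstar_algebra pmat \<Rightarrow> bool" where
  "is_proj x \<longleftrightarrow> (case x of (n, p) \<Rightarrow> mat_supp n n p \<and> mat_adj p = p \<and> mat_mul n p p = p)"

definition mvn_equiv :: "'a::unital_cstar_algebra pmat \<Rightarrow> 'a pmat \<Rightarrow> bool" where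
  "mvn_equiv x y \<longleftrightarrow> (case x of (n, p) \<Rightarrow> case y of (m, q) \<Rightarrow>
     (\<exists>v. mat_supp m n v \<and> mat_mul m (mat_adj v) v = p \<and> mat_mul n v (mat_adj v) = q))"

definition dsum :: "'a::zero pmat \<Rightarrow> 'a pmat \<Rightarrow> 'a pmat" where
  "dsum x y = (case x of (n, p) \<Rightarrow> case y of (m, q) \<Rightarrow>
     (n + m, \<lambda>i j. if i < n \<and> j < n then p i j
                   else if n \<le> i \<and> n \<le> j then q (i - n) (j - n) else 0))"

definition unit_proj :: "nat \<Rightarrow> 'a::{zero,one} pmat" where
  "unit_proj k = (k, \<lambda>i j. if i = j \<and> i < k then 1 else 0)"

section \<open>\<open>K_0(A)\<close> as the Grothendieck group (formal differences [x] - [y])\<close>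

definition k0_rel :: "(('a::unital_cstar_algebra pmat \<times> 'a pmat) \<times> ('a pmat \<times> 'a pmat)) set" where
  "k0_rel = {((x, y), (x', y')). is_proj x \<and> is_proj y \<and> is_proj x' \<and> is_proj y' \<and>
     (\<exists>k. mvn_equiv (dsum (dsum x y') (unit_proj k)) (dsum (dsum x' y) (unit_proj k)))}"

definition K0 :: "'a::unital_cstar_algebra itself \<Rightarrow> ('a pmat \<times> 'a pmat) set set" where
  "K0 _ = {(x, y). is_proj x \<and> is_proj y} // k0_rel"

definition k0_class :: "'a::unital_cstar_algebra pmat \<times> 'a pmat \<Rightarrow> ('a pmat \<times> 'a pmat) set" where
  "k0_class u = k0_rel `` {u}"

definition k0_zero :: "'a::unital_cstar_algebra itself \<Rightarrow> ('a pmat \<times> 'a pmat) set" where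
  "k0_zero _ = k0_class ((0, \<lambda>i j. 0), (0, \<lambda>i j. 0))"

definition k0_add :: "('a::unital_cstar_algebra pmat \<times> 'a pmat) set
    \<Rightarrow> ('a pmat \<times> 'a pmat) set \<Rightarrow> ('a pmat \<times> 'a pmat) set" where
  "k0_add X Y = \<Union>{k0_class (dsum x x', dsum y y') | x y x' y'. (x, y) \<in> X \<and> (x', y') \<in> Y}"

definition k0_neg :: "('a::unital_cstar_algebra pmat \<times> 'a pmat) set \<Rightarrow> ('a pmat \<times> 'a pmat) set" where
  "k0_neg X = {(y, x) | x y. (x, y) \<in> X}"

definition k0_subgroup :: "('a::unital_cstar_algebra pmat \<times> 'a pmat) set set \<Rightarrow> bool" where
  "k0_subgroup G \<longleftrightarrow> G \<subseteq> K0 TYPE('a) \<and> k0_zero TYPE('a) \<in> G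
     \<and> (\<forall>X\<in>G. \<forall>Y\<in>G. k0_add X Y \<in> G) \<and> (\<forall>X\<in>G. k0_neg X \<in> G)"

definition map_pmat :: "('a \<Rightarrow> 'b) \<Rightarrow> 'a pmat \<Rightarrow> 'b pmat" where
  "map_pmat f x = (case x of (n, p) \<Rightarrow> (n, \<lambda>i j. f (p i j)))"

definition k0_map :: "('a::unital_cstar_algebra \<Rightarrow> 'a) \<Rightarrow> ('a pmat \<times> 'a pmat) set \<Rightarrow> ('a pmat \<times> 'a pmat) set" where
  "k0_map \<alpha> X = \<Union>{k0_class (map_pmat \<alpha> x, map_pmat \<alpha> y) | x y. (x, y) \<in> X}"

definition proj_trace :: "('a::unital_cstar_algebra \<Rightarrow> complex) \<Rightarrow> 'a pmat \<Rightarrow> real" where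
  "proj_trace \<tau> x = (case x of (n, p) \<Rightarrow> Re (\<Sum>i<n. \<tau> (p i i)))"

definition rho :: "('a::unital_cstar_algebra pmat \<times> 'a pmat) set \<Rightarrow> ('a \<Rightarrow> complex) \<Rightarrow> real" where
  "rho X \<tau> = (SOME r. \<exists>x y. (x, y) \<in> X \<and> r = proj_trace \<tau> x - proj_trace \<tau> y)"

end

theory Submission
  imports Defs "HOL-Computational_Algebra.Formal_Power_Series" "HOL-Analysis.Generalised_Binomial_Theorem"
begin

section \<open>Basic algebra of star and scaling\<close>


lemma cs_scale_zero_right [simp]: "cs_scale c 0 = 0"
  using cs_scale_add_right[of c 0 0] by simp

lemma cs_scale_minus_right: "cs_scale c (- a) = - cs_scale c a"
proof -
  have "cs_scale c a + cs_scale c (-a) = 0" using cs_scale_add_right[of c a "-a"] by simp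
  then show ?thesis by (rule minus_unique[symmetric])
qed

lemma cs_scale_diff_right: "cs_scale c (a - b) = cs_scale c a - cs_scale c b"
  by (simp only: diff_conv_add_uminus cs_scale_add_right cs_scale_minus_right)

lemma cs_scale_one [simp]: "cs_scale 1 a = a"
  using cs_scale_of_real[of 1 a] by simp

lemma cs_scale_real: "cs_scale (complex_of_real r) a = r *\<^sub>R a"
  by (rule cs_scale_of_real)

lemma cs_star_zero [simp]: "cs_star 0 = 0"
  using cs_star_add[of 0 0] by simp

lemma cs_star_minus: "cs_star (- a) = - cs_star a"
proof -
  have "cs_star a + cs_star (-a) = 0" using cs_star_add[of a "-a"] by simp
  then show ?thesis by (rule minus_unique[symmetric])
qed

lemma cs_star_diff: "cs_star (a - b) = cs_star a - cs_star b"
  by (simp only: diff_conv_add_uminus cs_star_add cs_star_minus)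

lemma cs_star_scaleR: "cs_star (r *\<^sub>R a) = r *\<^sub>R cs_star a"
  using cs_star_scale[of "complex_of_real r" a] by (simp add: cs_scale_of_real)

lemma cs_star_one [simp]: "cs_star 1 = 1"
proof -
  have "cs_star 1 = cs_star 1 * cs_star (cs_star 1)" by (simp add: cs_star_star)
  also have "\<dots> = cs_star (cs_star 1 * 1)" by (rule cs_star_mult[symmetric])
  also have "\<dots> = 1" by (simp add: cs_star_star)
  finally show ?thesis .
qed

lemma norm_cs_star_le: "norm a \<le> norm (cs_star a)"
proof (cases "a = 0")
  case True then show ?thesis by simp
next
  case False
  have "(norm a)\<^sup>2 = norm (cs_star a * a)" by (simp add: cstar_identity)
  also have "\<dots> \<le> norm (cs_star a) * norm a" by (rule norm_mult_ineq)
  finally have "norm a * norm a \<le> norm (cs_star a) * norm a" by (simp add: power2_eq_square)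
  with False show ?thesis by simp
qed

lemma norm_cs_star [simp]: "norm (cs_star a) = norm a"
  using norm_cs_star_le[of a] norm_cs_star_le[of "cs_star a"] by (simp add: cs_star_star)

lemma bounded_linear_cs_star: "bounded_linear cs_star"
  by (rule bounded_linear_intro[where K=1]) (auto simp: cs_star_add cs_star_scaleR)

lemma cs_star_power: "cs_star (x ^ n) = (cs_star x) ^ n"
proof (induction n)
  case 0 then show ?case by simp
next
  case (Suc n)
  have "cs_star (x ^ Suc n) = cs_star (x ^ n * x)" by (simp only: power_Suc2)
  also have "\<dots> = cs_star x * cs_star (x ^ n)" by (simp add: cs_star_mult)
  also have "\<dots> = cs_star x ^ Suc n" using Suc by simp
  finally show ?case .
qed


section \<open>Binomial series\<close>

definition Rs :: "real \<Rightarrow> 'a::unital_cstar_algebra \<Rightarrow> 'a" where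
  "Rs a w = (\<Sum>n. (a gchoose n) *\<^sub>R ((- w) ^ n))"

lemma Rs_abs_summable:
  fixes w :: "'a::unital_cstar_algebra"
  assumes "norm w < 1"
  shows "summable (\<lambda>n. norm ((a gchoose n) *\<^sub>R ((- w) ^ n)))"
proof -
  have cr: "ereal (norm (norm w)) < conv_radius (\<lambda>n. (a gchoose n)::real)"
    using assms by (simp add: conv_radius_gchoose)
  have "summable (\<lambda>n. norm ((a gchoose n) * (norm w) ^ n))"
    by (rule abs_summable_in_conv_radius[OF cr])
  then show ?thesis
  proof (rule summable_comparison_test')
    fix n
    have "norm ((a gchoose n) *\<^sub>R ((- w) ^ n)) = \<bar>a gchoose n\<bar> * norm ((- w) ^ n)" by simp
    also have "\<dots> \<le> \<bar>a gchoose n\<bar> * norm w ^ n"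
      using norm_power_ineq[of "-w" n] by (intro mult_left_mono) auto
    finally show "norm (norm ((a gchoose n) *\<^sub>R ((- w) ^ n))) \<le> norm ((a gchoose n) * (norm w) ^ n)"
      by (simp add: abs_mult power_abs)
  qed
qed

lemma Rs_summable:
  fixes w :: "'a::unital_cstar_algebra"
  assumes "norm w < 1"
  shows "summable (\<lambda>n. (a gchoose n) *\<^sub>R ((- w) ^ n))"
  using summable_norm_cancel[OF Rs_abs_summable[OF assms]] .

lemma Rs_mult:
  fixes w :: "'a::unital_cstar_algebra"
  assumes "norm w < 1"
  shows "Rs a w * Rs b w = Rs (a + b) w"
proof -
  have "Rs a w * Rs b w = (\<Sum>k. \<Sum>i\<le>k. ((a gchoose i) *\<^sub>R ((- w) ^ i)) * ((b gchoose (k - i)) *\<^sub>R ((- w) ^ (k - i))))"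
    unfolding Rs_def by (rule Cauchy_product[OF Rs_abs_summable[OF assms] Rs_abs_summable[OF assms]])
  also have "\<dots> = (\<Sum>k. ((a + b) gchoose k) *\<^sub>R ((- w) ^ k))"
  proof (rule suminf_cong)
    fix k
    have "(\<Sum>i\<le>k. ((a gchoose i) *\<^sub>R ((- w) ^ i)) * ((b gchoose (k - i)) *\<^sub>R ((- w) ^ (k - i))))
        = (\<Sum>i\<le>k. ((a gchoose i) * (b gchoose (k - i))) *\<^sub>R ((- w) ^ k))"
    proof (rule sum.cong[OF refl])
      fix i assume "i \<in> {..k}"
      then have "(- w) ^ i * (- w) ^ (k - i) = (- w) ^ k"
        by (simp add: power_add[symmetric])
      then show "((a gchoose i) *\<^sub>R ((- w) ^ i)) * ((b gchoose (k - i)) *\<^sub>R ((- w) ^ (k - i)))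
          = ((a gchoose i) * (b gchoose (k - i))) *\<^sub>R ((- w) ^ k)"
        by simp
    qed
    also have "\<dots> = (\<Sum>i\<le>k. (a gchoose i) * (b gchoose (k - i))) *\<^sub>R ((- w) ^ k)"
      by (simp add: scaleR_sum_left)
    also have "(\<Sum>i\<le>k. (a gchoose i) * (b gchoose (k - i))) = (a + b) gchoose k"
      using gbinomial_Vandermonde[of a b k] by (simp add: atMost_atLeast0)
    finally show "(\<Sum>i\<le>k. ((a gchoose i) *\<^sub>R ((- w) ^ i)) * ((b gchoose (k - i)) *\<^sub>R ((- w) ^ (k - i))))
        = ((a + b) gchoose k) *\<^sub>R ((- w) ^ k)" .
  qed
  finally show ?thesis unfolding Rs_def .
qed

lemma Rs_zero: "Rs 0 w = 1"
proof -
  have "Rs 0 w = (\<Sum>n\<in>{0}. ((0::real) gchoose n) *\<^sub>R ((- w) ^ n))"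
    unfolding Rs_def by (rule suminf_finite) (auto simp: gbinomial_0_left)
  then show ?thesis by simp
qed

lemma gchoose_one_ge2: "n \<ge> 2 \<Longrightarrow> ((1::real) gchoose n) = 0"
  using binomial_gbinomial[of 1 n, where 'a=real] by (simp add: binomial_eq_0)

lemma Rs_one: "Rs 1 w = 1 - w"
proof -
  have "Rs 1 w = (\<Sum>n\<in>{0,1}. ((1::real) gchoose n) *\<^sub>R ((- w) ^ n))"
    unfolding Rs_def by (rule suminf_finite) (auto simp: gchoose_one_ge2)
  then show ?thesis by simp
qed

lemma Rs_star:
  fixes w :: "'a::unital_cstar_algebra"
  assumes "norm w < 1"
  shows "cs_star (Rs a w) = Rs a (cs_star w)"
proof -
  have "cs_star (Rs a w) = (\<Sum>n. cs_star ((a gchoose n) *\<^sub>R ((- w) ^ n)))"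
    unfolding Rs_def by (rule bounded_linear.suminf[OF bounded_linear_cs_star Rs_summable[OF assms]])
  also have "\<dots> = Rs a (cs_star w)"
    unfolding Rs_def by (simp add: cs_star_scaleR cs_star_power cs_star_minus)
  finally show ?thesis .
qed

lemma Rs_selfadj:
  fixes w :: "'a::unital_cstar_algebra"
  assumes "norm w < 1" "cs_star w = w"
  shows "cs_star (Rs a w) = Rs a w"
  using Rs_star[OF assms(1)] assms(2) by simp

lemma Rs_commute:
  fixes w x :: "'a::unital_cstar_algebra"
  assumes "norm w < 1" "x * w = w * x"
  shows "x * Rs a w = Rs a w * x"
proof -
  have c: "x * (- w) ^ n = (- w) ^ n * x" for n
  proof -
    have xw: "x * (- w) = (- w) * x" using assms(2) by simp
    show ?thesis
    proof (induction n)
      case 0 then show ?case by simp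
    next
      case (Suc n)
      have "x * (- w) ^ Suc n = (x * (- w)) * (- w) ^ n" by (simp add: mult.assoc)
      also have "\<dots> = (- w) * (x * (- w) ^ n)" by (simp only: xw mult.assoc)
      also have "\<dots> = (- w) * ((- w) ^ n * x)" by (simp only: Suc)
      also have "\<dots> = (- w) ^ Suc n * x" by (simp only: power_Suc mult.assoc)
      finally show ?case .
    qed
  qed
  have "x * Rs a w = (\<Sum>n. x * ((a gchoose n) *\<^sub>R ((- w) ^ n)))"
    unfolding Rs_def by (rule suminf_mult[OF Rs_summable[OF assms(1)], symmetric])
  also have "\<dots> = (\<Sum>n. ((a gchoose n) *\<^sub>R ((- w) ^ n)) * x)"
    by (simp add: c)
  also have "\<dots> = Rs a w * x"
    unfolding Rs_def by (rule suminf_mult2[OF Rs_summable[OF assms(1)], symmetric])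
  finally show ?thesis .
qed


definition sa :: "'a::unital_cstar_algebra \<Rightarrow> bool" where
  "sa x \<longleftrightarrow> cs_star x = x"

lemma sa_one [simp]: "sa (1::'a::unital_cstar_algebra)"
  by (simp add: sa_def)

lemma sa_zero [simp]: "sa (0::'a::unital_cstar_algebra)"
  by (simp add: sa_def)

lemma sa_add: "sa x \<Longrightarrow> sa y \<Longrightarrow> sa (x + y)"
  by (simp add: sa_def cs_star_add)

lemma sa_diff: "sa x \<Longrightarrow> sa y \<Longrightarrow> sa (x - y)"
  by (simp add: sa_def cs_star_diff)

lemma sa_minus: "sa x \<Longrightarrow> sa (- x)"
  by (simp add: sa_def cs_star_minus)

lemma sa_scaleR: "sa x \<Longrightarrow> sa (r *\<^sub>R x)"
  by (simp add: sa_def cs_star_scaleR)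

lemma sa_of_real [simp]: "sa (of_real r :: 'a::unital_cstar_algebra)"
  unfolding of_real_def by (rule sa_scaleR) simp

lemma sa_mult: "sa x \<Longrightarrow> sa y \<Longrightarrow> x * y = y * x \<Longrightarrow> sa (x * y)"
  by (simp add: sa_def cs_star_mult)

lemma sa_Rs: "norm w < 1 \<Longrightarrow> sa w \<Longrightarrow> sa (Rs a w)"
  unfolding sa_def by (rule Rs_selfadj)

lemma norm_sa_square:
  fixes x :: "'a::unital_cstar_algebra"
  assumes "sa x"
  shows "norm (x * x) = (norm x)\<^sup>2"
  using cstar_identity[of x] assms by (simp add: sa_def)

lemma cs_scale_zero_left [simp]: "cs_scale 0 a = 0"
  using cs_scale_of_real[of 0 a] by simp

lemma cs_scale_neg_one: "cs_scale (-1) a = - a"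
  using cs_scale_of_real[of "-1" a] by simp

lemma order_norm:
  fixes x u v :: "'a::unital_cstar_algebra"
  assumes sx: "sa x" and su: "sa u" and sv: "sa v" and c: "u * v = v * u"
    and th: "\<theta> \<ge> 0"
    and h1: "of_real \<theta> + x = u * u" and h2: "of_real \<theta> - x = v * v"
  shows "norm x \<le> \<theta>"
proof -
  define iv where "iv = cs_scale \<i> v"
  define miv where "miv = cs_scale (- \<i>) v"
  define w where "w = u + iv"
  define P where "P = cs_scale \<i> (u * v)"
  define Q where "Q = cs_scale (- \<i>) (u * v)"
  have PQ: "P + Q = 0"
    unfolding P_def Q_def by (simp add: cs_scale_add_left[symmetric])
  have sw: "cs_star w = u + miv"
    unfolding w_def iv_def miv_def using su sv
    by (simp add: sa_def cs_star_add cs_star_scale)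
  have ivv: "iv * iv = - (v * v)"
    unfolding iv_def by (simp add: mult_cs_scale_left mult_cs_scale_right cs_scale_scale cs_scale_neg_one)
  have mivv: "miv * miv = - (v * v)"
    unfolding miv_def by (simp add: mult_cs_scale_left mult_cs_scale_right cs_scale_scale cs_scale_neg_one)
  have mivi: "miv * iv = v * v"
    unfolding miv_def iv_def by (simp add: mult_cs_scale_left mult_cs_scale_right cs_scale_scale)
  have uiv: "u * iv = P" "iv * u = P"
    unfolding iv_def P_def using c by (simp_all add: mult_cs_scale_left mult_cs_scale_right)
  have umiv: "u * miv = Q" "miv * u = Q"
    unfolding miv_def Q_def using c by (simp_all add: mult_cs_scale_left mult_cs_scale_right)
  have ww: "cs_star w * w = u * u + v * v"
  proof -
    have "cs_star w * w = (u + miv) * (u + iv)" unfolding sw by (simp only: w_def)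
    also have "\<dots> = u * u + u * iv + miv * u + miv * iv"
      by (simp add: algebra_simps)
    also have "\<dots> = u * u + v * v + (P + Q)"
      by (simp add: uiv umiv mivi algebra_simps)
    finally show ?thesis using PQ by simp
  qed
  have uv: "u * u + v * v = of_real (2 * \<theta>)"
  proof -
    have "u * u + v * v = (of_real \<theta> + x) + (of_real \<theta> - x)" using h1 h2 by simp
    also have "\<dots> = of_real (2 * \<theta>)" by (simp add: of_real_add[symmetric])
    finally show ?thesis .
  qed
  have "(norm w)\<^sup>2 = norm (cs_star w * w)" by (simp only: cstar_identity)
  also have "\<dots> = norm (of_real (2 * \<theta>) :: 'a)" by (simp only: ww uv)
  also have "\<dots> = 2 * \<theta>" using th by (subst norm_of_real) simp
  finally have nw: "(norm w)\<^sup>2 = 2 * \<theta>" .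
  have sq: "w * w + cs_star w * cs_star w = 4 *\<^sub>R x"
  proof -
    have "w * w + cs_star w * cs_star w = (u + iv) * (u + iv) + (u + miv) * (u + miv)"
      unfolding sw by (simp only: w_def)
    also have "\<dots> = (u * u + u * iv + iv * u + iv * iv) + (u * u + u * miv + miv * u + miv * miv)"
      by (simp add: algebra_simps)
    also have "\<dots> = 2 *\<^sub>R (u * u) - 2 *\<^sub>R (v * v) + 2 *\<^sub>R (P + Q)"
      by (simp add: uiv umiv ivv mivv algebra_simps scaleR_2)
    also have "\<dots> = 2 *\<^sub>R ((of_real \<theta> + x) - (of_real \<theta> - x))"
      using PQ h1 h2 by (simp add: scaleR_diff_right)
    also have "(of_real \<theta> + x) - (of_real \<theta> - x) = 2 *\<^sub>R x"
      by (simp add: scaleR_2)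
    also have "2 *\<^sub>R (2 *\<^sub>R x) = 4 *\<^sub>R x"
      by simp
    finally show ?thesis .
  qed
  have "4 * norm x = norm (w * w + cs_star w * cs_star w)"
    using sq by simp
  also have "\<dots> \<le> norm (w * w) + norm (cs_star w * cs_star w)"
    by (rule norm_triangle_ineq)
  also have "\<dots> \<le> norm w * norm w + norm (cs_star w) * norm (cs_star w)"
    by (intro add_mono norm_mult_ineq)
  also have "\<dots> = 4 * \<theta>"
    using nw by (simp add: power2_eq_square)
  finally show ?thesis by simp
qed

section \<open>Tracial states\<close>

lemma tr_add: "tracial_state \<phi> \<Longrightarrow> \<phi> (a + b) = \<phi> a + \<phi> b"
  unfolding tracial_state_def by blast

lemma tr_zero: "tracial_state \<phi> \<Longrightarrow> \<phi> 0 = 0"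
  using tr_add[of \<phi> 0 0] by simp

lemma tr_diff: "tracial_state \<phi> \<Longrightarrow> \<phi> (a - b) = \<phi> a - \<phi> b"
  using tr_add[of \<phi> "a - b" b] by simp

lemma tr_scale: "tracial_state \<phi> \<Longrightarrow> \<phi> (cs_scale c a) = c * \<phi> a"
  unfolding tracial_state_def by blast

lemma tr_scaleR: "tracial_state \<phi> \<Longrightarrow> \<phi> (r *\<^sub>R a) = complex_of_real r * \<phi> a"
  using tr_scale[of \<phi> "complex_of_real r" a] by (simp add: cs_scale_of_real)

lemma tr_one: "tracial_state \<phi> \<Longrightarrow> \<phi> 1 = 1"
  unfolding tracial_state_def by blast

lemma tr_comm: "tracial_state \<phi> \<Longrightarrow> \<phi> (a * b) = \<phi> (b * a)"
  unfolding tracial_state_def by blast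

lemma tr_pos: "tracial_state \<phi> \<Longrightarrow> Im (\<phi> (cs_star a * a)) = 0 \<and> Re (\<phi> (cs_star a * a)) \<ge> 0"
  unfolding tracial_state_def by blast

lemma tr_sum: "tracial_state \<phi> \<Longrightarrow> \<phi> (\<Sum>i\<in>A. f i) = (\<Sum>i\<in>A. \<phi> (f i))"
  by (induction A rule: infinite_finite_induct) (simp_all add: tr_zero tr_add)

lemma tr_bound_small:
  fixes x :: "'a::unital_cstar_algebra"
  assumes tr: "tracial_state \<phi>" and sx: "sa x" and nx: "norm x < 1"
  shows "Im (\<phi> x) = 0 \<and> \<bar>Re (\<phi> x)\<bar> \<le> 1"
proof -
  define R where "R = Rs (1/2) x"
  have sR: "cs_star R = R" using sa_Rs[OF nx sx] by (simp add: R_def sa_def)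
  have "R * R = 1 - x" unfolding R_def by (simp add: Rs_mult[OF nx] Rs_one)
  then have p1: "Im (\<phi> (1 - x)) = 0 \<and> Re (\<phi> (1 - x)) \<ge> 0"
    using tr_pos[OF tr, of R] sR by simp
  have nx': "norm (- x) < 1" using nx by simp
  define S where "S = Rs (1/2) (- x)"
  have sS: "cs_star S = S" using sa_Rs[OF nx' sa_minus[OF sx]] by (simp add: S_def sa_def)
  have "S * S = 1 + x" unfolding S_def by (simp add: Rs_mult[OF nx'] Rs_one)
  then have p2: "Im (\<phi> (1 + x)) = 0 \<and> Re (\<phi> (1 + x)) \<ge> 0"
    using tr_pos[OF tr, of S] sS by simp
  show ?thesis using p1 p2 by (simp add: tr_diff[OF tr] tr_add[OF tr] tr_one[OF tr] abs_le_iff)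
qed

lemma tr_bound:
  fixes x :: "'a::unital_cstar_algebra"
  assumes tr: "tracial_state \<phi>" and sx: "sa x"
  shows "Im (\<phi> x) = 0 \<and> \<bar>Re (\<phi> x)\<bar> \<le> norm x"
proof -
  have key: "Im (\<phi> x) = 0 \<and> \<bar>Re (\<phi> x)\<bar> \<le> t" if t: "t > norm x" for t
  proof -
    have tpos: "t > 0" using t norm_ge_zero[of x] by linarith
    have "norm ((1/t) *\<^sub>R x) = norm x / t" using tpos by simp
    also have "\<dots> < 1" using t tpos by (simp add: divide_less_eq)
    finally have n1: "norm ((1/t) *\<^sub>R x) < 1" .
    from tr_bound_small[OF tr sa_scaleR[OF sx] n1]
    have h: "Im (\<phi> ((1/t) *\<^sub>R x)) = 0 \<and> \<bar>Re (\<phi> ((1/t) *\<^sub>R x))\<bar> \<le> 1" .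
    have eq: "\<phi> ((1/t) *\<^sub>R x) = complex_of_real (1/t) * \<phi> x" by (rule tr_scaleR[OF tr])
    have "Im (\<phi> ((1/t) *\<^sub>R x)) = (1/t) * Im (\<phi> x)" unfolding eq by simp
    moreover have "Re (\<phi> ((1/t) *\<^sub>R x)) = (1/t) * Re (\<phi> x)" unfolding eq by simp
    ultimately have h1: "(1/t) * Im (\<phi> x) = 0" and h2: "\<bar>(1/t) * Re (\<phi> x)\<bar> \<le> 1" using h by auto
    from h1 tpos have "Im (\<phi> x) = 0" by simp
    moreover from h2 tpos have "\<bar>Re (\<phi> x)\<bar> \<le> t" by (simp add: abs_mult divide_le_eq)
    ultimately show ?thesis by simp
  qed
  have "Im (\<phi> x) = 0" using key[of "norm x + 1"] by simp
  moreover have "\<bar>Re (\<phi> x)\<bar> \<le> norm x"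
  proof (rule field_le_epsilon)
    fix e :: real assume "0 < e"
    then have "norm x + e > norm x" by simp
    from key[OF this] show "\<bar>Re (\<phi> x)\<bar> \<le> norm x + e" by blast
  qed
  ultimately show ?thesis by simp
qed


section \<open>Traces of matrices and K_0\<close>

lemma sum_lessThan_add_split:
  fixes f :: "nat \<Rightarrow> 'b::comm_monoid_add"
  shows "(\<Sum>i<n + m. f i) = (\<Sum>i<n. f i) + (\<Sum>i<m. f (i + n))"
  by (induction m) (simp_all add: add_ac)

lemma proj_trace_dsum:
  "proj_trace \<phi> (dsum (n, p) (m, q)) = proj_trace \<phi> (n, p) + proj_trace \<phi> (m, q)"
proof -
  have "(\<Sum>i<n + m. \<phi> (if i < n \<and> i < n then p i i else if n \<le> i \<and> n \<le> i then q (i - n) (i - n) else 0))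
      = (\<Sum>i<n. \<phi> (p i i)) + (\<Sum>i<m. \<phi> (q i i))"
    by (simp add: sum_lessThan_add_split)
  then show ?thesis
    unfolding dsum_def proj_trace_def prod.case by simp_all
qed

lemma proj_trace_dsum':
  "proj_trace \<phi> (dsum x y) = proj_trace \<phi> x + proj_trace \<phi> y"
  using proj_trace_dsum by (metis prod.exhaust)

lemma proj_trace_unit:
  assumes "tracial_state \<phi>"
  shows "proj_trace \<phi> (unit_proj k) = real k"
proof -
  have "(\<Sum>i<k. \<phi> (if i = i \<and> i < k then 1 else 0)) = (\<Sum>i<k. 1)"
    using assms by (intro sum.cong) (simp_all add: tr_one)
  then show ?thesis using assms by (simp add: unit_proj_def proj_trace_def tr_one)
qed

lemma proj_trace_mvn:
  assumes tr: "tracial_state \<phi>" and mv: "mvn_equiv x y"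
  shows "proj_trace \<phi> x = proj_trace \<phi> y"
proof -
  obtain n p where x: "x = (n, p)" by (cases x)
  obtain m q where y: "y = (m, q)" by (cases y)
  from mv obtain v where pv: "mat_mul m (mat_adj v) v = p" and qv: "mat_mul n v (mat_adj v) = q"
    by (auto simp: mvn_equiv_def x y)
  have "(\<Sum>i<n. \<phi> (p i i)) = (\<Sum>i<n. \<Sum>l<m. \<phi> (cs_star (v l i) * v l i))"
    by (simp add: pv[symmetric] mat_mul_def mat_adj_def tr_sum[OF tr])
  also have "\<dots> = (\<Sum>l<m. \<Sum>i<n. \<phi> (cs_star (v l i) * v l i))"
    by (rule sum.swap)
  also have "\<dots> = (\<Sum>l<m. \<Sum>i<n. \<phi> (v l i * cs_star (v l i)))"
    by (simp add: tr_comm[OF tr, of "cs_star _"])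
  also have "\<dots> = (\<Sum>l<m. \<phi> (q l l))"
    by (simp add: qv[symmetric] mat_mul_def mat_adj_def tr_sum[OF tr])
  finally have eq: "(\<Sum>i<n. \<phi> (p i i)) = (\<Sum>l<m. \<phi> (q l l))" .
  show ?thesis unfolding x y proj_trace_def prod.case by (simp only: eq)
qed

definition td :: "('a::unital_cstar_algebra \<Rightarrow> complex) \<Rightarrow> 'a pmat \<times> 'a pmat \<Rightarrow> real" where
  "td \<phi> z = proj_trace \<phi> (fst z) - proj_trace \<phi> (snd z)"

lemma k0_rel_td:
  assumes tr: "tracial_state \<phi>" and r: "(z, z') \<in> k0_rel"
  shows "td \<phi> z = td \<phi> z'"
proof -
  obtain x y where z: "z = (x, y)" by (cases z)
  obtain x' y' where z': "z' = (x', y')" by (cases z')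
  from r obtain k where "mvn_equiv (dsum (dsum x y') (unit_proj k)) (dsum (dsum x' y) (unit_proj k))"
    by (auto simp: k0_rel_def z z')
  from proj_trace_mvn[OF tr this]
  have "proj_trace \<phi> x + proj_trace \<phi> y' + real k = proj_trace \<phi> x' + proj_trace \<phi> y + real k"
    by (simp add: proj_trace_dsum' proj_trace_unit[OF tr])
  then show ?thesis by (simp add: td_def z z')
qed

lemma rho_const:
  assumes "X \<noteq> {}" and "\<And>z. z \<in> X \<Longrightarrow> td \<phi> z = c"
  shows "rho X \<phi> = c"
proof -
  from assms(1) obtain x y where xy: "(x, y) \<in> X" by auto
  have ex: "\<exists>r x y. (x, y) \<in> X \<and> r = proj_trace \<phi> x - proj_trace \<phi> y"
    using xy by blast
  have "\<exists>x y. (x, y) \<in> X \<and> rho X \<phi> = proj_trace \<phi> x - proj_trace \<phi> y"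
    unfolding rho_def by (rule someI_ex[OF ex])
  then obtain x' y' where "(x', y') \<in> X" "rho X \<phi> = proj_trace \<phi> x' - proj_trace \<phi> y'" by blast
  with assms(2)[of "(x', y')"] show ?thesis by (simp add: td_def)
qed

lemma rho_empty: "rho {} \<phi> = rho {} \<psi>"
  by (simp add: rho_def)

lemma proj_trace_map:
  "proj_trace \<phi> (map_pmat \<alpha> x) = proj_trace (\<lambda>a. \<phi> (\<alpha> a)) x"
  by (cases x) (simp add: proj_trace_def map_pmat_def)

lemma star_aut_one:
  assumes "star_automorphism \<alpha>"
  shows "\<alpha> 1 = (1::'a::unital_cstar_algebra)"
proof -
  from assms have b: "bij \<alpha>" and m: "\<And>a b. \<alpha> (a * b) = \<alpha> a * \<alpha> b"
    by (auto simp: star_automorphism_def)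
  from b have "surj \<alpha>" by (rule bij_is_surj)
  then obtain c where c: "\<alpha> c = 1" by (metis surjD)
  have "\<alpha> 1 = \<alpha> 1 * \<alpha> c" by (simp add: c)
  also have "\<dots> = \<alpha> (1 * c)" by (rule m[symmetric])
  also have "\<dots> = 1" by (simp add: c)
  finally show ?thesis .
qed

lemma tracial_comp:
  assumes tr: "tracial_state \<tau>" and al: "star_automorphism \<alpha>"
  shows "tracial_state (\<lambda>a. \<tau> (\<alpha> a))"
proof -
  from al have add: "\<And>a b. \<alpha> (a + b) = \<alpha> a + \<alpha> b" and m: "\<And>a b. \<alpha> (a * b) = \<alpha> a * \<alpha> b"
    and sc: "\<And>c a. \<alpha> (cs_scale c a) = cs_scale c (\<alpha> a)" and st: "\<And>a. \<alpha> (cs_star a) = cs_star (\<alpha> a)"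
    by (auto simp: star_automorphism_def)
  show ?thesis
    unfolding tracial_state_def
    using tr_add[OF tr] tr_scale[OF tr] tr_pos[OF tr] tr_one[OF tr] tr_comm[OF tr] star_aut_one[OF al]
    by (simp add: add m sc st)
qed

lemma rho_G_invariant:
  assumes tr: "tracial_state \<tau>" and al: "star_automorphism \<alpha>"
    and YK: "Y \<in> K0 TYPE('a)" and fx: "k0_map \<alpha> Y = Y"
  shows "rho Y \<tau> = rho Y (\<lambda>a. \<tau> (\<alpha> (a::'a::unital_cstar_algebra)))"
proof (cases "Y = {}")
  case True then show ?thesis by (simp add: rho_empty)
next
  case False
  have tr2: "tracial_state (\<lambda>a. \<tau> (\<alpha> a))" by (rule tracial_comp[OF tr al])
  from YK obtain u where u: "Y = k0_rel `` {u}"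
    unfolding K0_def by (auto elim!: quotientE)
  have memY: "td (\<lambda>a. \<tau> (\<alpha> a)) w = td (\<lambda>a. \<tau> (\<alpha> a)) u" if "w \<in> Y" for w
    using k0_rel_td[OF tr2, of u w] that u by auto
  have "rho Y (\<lambda>a. \<tau> (\<alpha> a)) = td (\<lambda>a. \<tau> (\<alpha> a)) u"
    by (rule rho_const[OF False memY])
  moreover have "rho Y \<tau> = td (\<lambda>a. \<tau> (\<alpha> a)) u"
  proof (rule rho_const[OF False])
    fix z assume "z \<in> Y"
    then have "z \<in> k0_map \<alpha> Y" using fx by simp
    then obtain x y where xy: "(x, y) \<in> Y" and z: "z \<in> k0_class (map_pmat \<alpha> x, map_pmat \<alpha> y)"
      unfolding k0_map_def by auto
    have "td \<tau> z = td \<tau> (map_pmat \<alpha> x, map_pmat \<alpha> y)"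
      using k0_rel_td[OF tr, of "(map_pmat \<alpha> x, map_pmat \<alpha> y)" z] z by (simp add: k0_class_def)
    also have "\<dots> = td (\<lambda>a. \<tau> (\<alpha> a)) (x, y)"
      by (simp add: td_def proj_trace_map)
    also have "\<dots> = td (\<lambda>a. \<tau> (\<alpha> a)) u" by (rule memY[OF xy])
    finally show "td \<tau> z = td (\<lambda>a. \<tau> (\<alpha> a)) u" .
  qed
  ultimately show ?thesis by simp
qed


lemma mvn_equiv_refl:
  assumes "is_proj z"
  shows "mvn_equiv z z"
proof -
  obtain n p where z: "z = (n, p)" by (cases z)
  from assms have s: "mat_supp n n p" and a: "mat_adj p = p" and m: "mat_mul n p p = p"
    by (auto simp: is_proj_def z)
  show ?thesis unfolding z mvn_equiv_def prod.case
    by (rule exI[of _ p]) (simp add: s a m)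
qed

lemma proj_invariant:
  fixes \<alpha> :: "'a::unital_cstar_algebra \<Rightarrow> 'a"
  assumes tr: "tracial_state \<tau>" and al: "star_automorphism \<alpha>"
    and dens: "\<forall>X\<in>K0 TYPE('a). \<forall>\<epsilon>>0. \<exists>Y\<in>G. \<forall>\<tau>. tracial_state \<tau> \<longrightarrow> \<bar>rho X \<tau> - rho Y \<tau>\<bar> < \<epsilon>"
    and GK: "G \<subseteq> K0 TYPE('a)"
    and fixG: "\<forall>X\<in>G. k0_map \<alpha> X = X"
    and e1: "cs_star e = e" and e2: "e * e = e"
  shows "Re (\<tau> (\<alpha> e)) = Re (\<tau> e)"
proof -
  define Pe :: "'a pmat" where "Pe = (1, \<lambda>i j. if i = 0 \<and> j = 0 then e else 0)"
  define Z :: "'a pmat" where "Z = (0, \<lambda>i j. 0)"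
  have pPe: "is_proj Pe"
  proof -
    have "mat_supp 1 1 (\<lambda>i j. if i = 0 \<and> j = 0 then e else 0)"
      by (simp add: mat_supp_def)
    moreover have "mat_adj (\<lambda>i j. if i = 0 \<and> j = 0 then e else 0) = (\<lambda>i j. if i = 0 \<and> j = 0 then e else 0)"
      by (auto simp: mat_adj_def e1 fun_eq_iff)
    moreover have "mat_mul 1 (\<lambda>i j. if i = 0 \<and> j = 0 then e else 0) (\<lambda>i j. if i = 0 \<and> j = 0 then e else 0)
        = (\<lambda>i j. if i = 0 \<and> j = 0 then e else 0)"
      by (auto simp: mat_mul_def e2 fun_eq_iff)
    ultimately show ?thesis by (simp add: is_proj_def Pe_def)
  qed
  have pZ: "is_proj Z"
    by (simp add: is_proj_def Z_def mat_supp_def mat_adj_def mat_mul_def fun_eq_iff)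
  have dsZ: "dsum (dsum Pe Z) (unit_proj 0) = Pe"
    by (auto simp: dsum_def Pe_def Z_def unit_proj_def fun_eq_iff)
  have refl: "((Pe, Z), (Pe, Z)) \<in> k0_rel"
  proof -
    have "mvn_equiv (dsum (dsum Pe Z) (unit_proj 0)) (dsum (dsum Pe Z) (unit_proj 0))"
      unfolding dsZ by (rule mvn_equiv_refl[OF pPe])
    then show ?thesis unfolding k0_rel_def using pPe pZ by blast
  qed
  define X where "X = k0_class (Pe, Z)"
  have XK: "X \<in> K0 TYPE('a)"
    unfolding X_def K0_def k0_class_def by (rule quotientI) (simp add: pPe pZ)
  have rhoX: "rho X \<phi> = Re (\<phi> e)" if trp: "tracial_state \<phi>" for \<phi>
  proof (rule rho_const)
    show "X \<noteq> {}" using refl by (auto simp: X_def k0_class_def)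
  next
    fix z assume "z \<in> X"
    then have "((Pe, Z), z) \<in> k0_rel" by (simp add: X_def k0_class_def)
    from k0_rel_td[OF trp this, symmetric]
    have "td \<phi> z = td \<phi> (Pe, Z)" .
    also have "\<dots> = Re (\<phi> e)"
      by (simp add: td_def proj_trace_def Pe_def Z_def)
    finally show "td \<phi> z = Re (\<phi> e)" .
  qed
  have tr2: "tracial_state (\<lambda>a. \<tau> (\<alpha> a))" by (rule tracial_comp[OF tr al])
  have "\<bar>Re (\<tau> (\<alpha> e)) - Re (\<tau> e)\<bar> < 2 * \<epsilon>" if ep: "\<epsilon> > 0" for \<epsilon>
  proof -
    from dens XK ep obtain Y where YG: "Y \<in> G"
      and h: "\<forall>\<tau>. tracial_state \<tau> \<longrightarrow> \<bar>rho X \<tau> - rho Y \<tau>\<bar> < \<epsilon>" by blast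
    have h1: "\<bar>Re (\<tau> e) - rho Y \<tau>\<bar> < \<epsilon>" using h tr rhoX[OF tr] by auto
    have h2: "\<bar>Re (\<tau> (\<alpha> e)) - rho Y (\<lambda>a. \<tau> (\<alpha> a))\<bar> < \<epsilon>"
      using h tr2 rhoX[OF tr2] by auto
    have "rho Y \<tau> = rho Y (\<lambda>a. \<tau> (\<alpha> a))"
      using rho_G_invariant[OF tr al] YG GK fixG by auto
    with h1 h2 show ?thesis by linarith
  qed
  then have key: "\<And>\<epsilon>. \<epsilon> > 0 \<Longrightarrow> \<bar>Re (\<tau> (\<alpha> e)) - Re (\<tau> e)\<bar> < 2 * \<epsilon>" by blast
  show ?thesis
  proof (rule ccontr)
    assume "Re (\<tau> (\<alpha> e)) \<noteq> Re (\<tau> e)"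
    then have d: "\<bar>Re (\<tau> (\<alpha> e)) - Re (\<tau> e)\<bar> > 0" by simp
    from key[of "\<bar>Re (\<tau> (\<alpha> e)) - Re (\<tau> e)\<bar> / 2"] d show False by simp
  qed
qed


lemma sa_inverse:
  fixes k j :: "'a::unital_cstar_algebra"
  assumes "sa k" "k * j = 1" "j * k = 1"
  shows "sa j"
proof -
  have l: "cs_star j * k = 1"
    using arg_cong[OF assms(2), of cs_star] assms(1) by (simp add: cs_star_mult sa_def)
  have "cs_star j = cs_star j * (k * j)" using assms(2) by simp
  also have "\<dots> = (cs_star j * k) * j" by (simp add: mult.assoc)
  also have "\<dots> = j" using l by simp
  finally show ?thesis by (simp add: sa_def)
qed

lemma norm_sa_lt1:
  fixes T :: "'a::unital_cstar_algebra"
  assumes "sa T" "norm (T * T) < 1"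
  shows "norm T < 1"
proof -
  have "(norm T)\<^sup>2 < 1" using norm_sa_square[OF assms(1)] assms(2) by simp
  then show ?thesis by (simp add: power_less_one_iff abs_less_iff power2_less_1_iff)
qed

lemma contraction:
  fixes h :: "'a::unital_cstar_algebra"
  assumes RR0: "real_rank_zero TYPE('a)" and sh: "sa h" and nh: "norm h \<le> 1" and eta: "\<eta> > 0"
  shows "\<exists>k s. sa k \<and> sa s \<and> s * s = 1 \<and> norm (h - k) < \<eta> \<and> norm (k - (1/2) *\<^sub>R s) \<le> 3/4"
proof -
  define e where "e = min \<eta> (1/8)"
  have e0: "e > 0" using eta by (simp add: e_def)
  have "h \<in> closure {a. cs_star a = a \<and> cs_invertible a}"
    using RR0 sh unfolding real_rank_zero_def sa_def by blast
  then obtain k where kS: "k \<in> {a. cs_star a = a \<and> cs_invertible a}" and dk: "dist k h < e"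
    using e0 unfolding closure_approachable by blast
  from kS have sk: "sa k" and "cs_invertible k" by (auto simp: sa_def)
  then obtain j where kj: "k * j = 1" and jk: "j * k = 1" unfolding cs_invertible_def by blast
  have sj: "sa j" by (rule sa_inverse[OF sk kj jk])
  have nhk: "norm (h - k) < e" using dk by (simp add: dist_norm norm_minus_commute)
  have nk: "norm k < 9/8"
  proof -
    have "norm k \<le> norm h + norm (h - k)" by (metis norm_triangle_sub add.commute norm_minus_commute)
    then show ?thesis using nh nhk by (simp add: e_def)
  qed
  define y where "y = k * k"
  have sy: "sa y" unfolding y_def by (rule sa_mult[OF sk sk refl])
  have ny: "norm y < 81/64"
  proof -
    have "norm y \<le> norm k * norm k" unfolding y_def by (rule norm_mult_ineq)
    also have "\<dots> < 9/8 * (9/8)" using nk by (intro mult_strict_mono) auto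
    finally show ?thesis by simp
  qed
  have ky: "k * y = y * k" by (simp add: y_def mult.assoc)
  have jy: "j * y = y * j"
  proof -
    have "j * y = k" unfolding y_def by (simp add: mult.assoc[symmetric] jk)
    moreover have "y * j = k" unfolding y_def by (simp add: mult.assoc kj)
    ultimately show ?thesis by simp
  qed
  define c :: real where "c = 25/16"
  define m :: real where "m = 1 / (1 + (norm j)\<^sup>2)"
  have pj: "0 < 1 + (norm j)\<^sup>2" by (metis add_pos_nonneg zero_less_one zero_le_power2)
  have m0: "m > 0" unfolding m_def using pj by simp
  have m1: "m \<le> 1" unfolding m_def using pj by (simp add: divide_le_eq)
  have mj: "m * (norm j)\<^sup>2 < 1" unfolding m_def using pj by (simp add: divide_less_eq)
  define z where "z = 1 - (1/c) *\<^sub>R y"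
  have sz: "sa z" unfolding z_def by (intro sa_diff sa_one sa_scaleR sy)
  have kz: "k * z = z * k" unfolding z_def by (simp add: algebra_simps ky)
  have jz: "j * z = z * j" unfolding z_def by (simp add: algebra_simps jy)
  define mj2 where "mj2 = m *\<^sub>R (j * j)"
  have nmj2: "norm mj2 < 1"
  proof -
    have "norm mj2 \<le> m * (norm j * norm j)"
      unfolding mj2_def using m0 by (simp add: mult_left_mono norm_mult_ineq)
    then show ?thesis using mj by (simp add: power2_eq_square)
  qed
  have smj2: "sa mj2" unfolding mj2_def by (intro sa_scaleR sa_mult[OF sj sj refl])
  define R1 where "R1 = Rs (1/2) mj2"
  have sR1: "sa R1" unfolding R1_def by (rule sa_Rs[OF nmj2 smj2])
  have R1sq: "R1 * R1 = 1 - mj2" unfolding R1_def by (simp add: Rs_mult[OF nmj2] Rs_one)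
  have kmj2: "k * mj2 = mj2 * k"
  proof -
    have "k * (j * j) = (j * j) * k"
      by (metis jk kj mult.assoc mult_1_left mult_1_right)
    then show ?thesis unfolding mj2_def by simp
  qed
  have kR1: "k * R1 = R1 * k" unfolding R1_def by (rule Rs_commute[OF nmj2 kmj2])
  have yR1: "y * R1 = R1 * y"
  proof -
    have "y * mj2 = mj2 * y" unfolding y_def using kmj2 by (metis mult.assoc)
    then show ?thesis unfolding R1_def by (rule Rs_commute[OF nmj2])
  qed
  define v where "v = (4/5) *\<^sub>R (k * R1)"
  have sv: "sa v" unfolding v_def by (intro sa_scaleR sa_mult[OF sk sR1 kR1])
  have kkjj: "k * k * (j * j) = 1"
    by (metis kj mult.assoc mult_1_left)
  have vv: "v * v = (16/25) *\<^sub>R (y - of_real m)"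
  proof -
    have "v * v = (16/25) *\<^sub>R ((k * R1) * (k * R1))" unfolding v_def by simp
    also have "(k * R1) * (k * R1) = k * k * (R1 * R1)"
      by (metis kR1 mult.assoc)
    also have "k * k * (R1 * R1) = k * k - m *\<^sub>R (k * k * (j * j))"
      by (simp add: R1sq mj2_def algebra_simps)
    also have "\<dots> = y - of_real m" by (simp add: kkjj y_def of_real_def)
    finally show ?thesis .
  qed
  define \<theta> where "\<theta> = 1 - m / c"
  have th0: "\<theta> \<ge> 0" and th1: "\<theta> < 1" using m0 m1 by (auto simp: \<theta>_def c_def field_simps)
  have h2: "of_real \<theta> - z = v * v"
  proof -
    have "of_real \<theta> - z = (1/c) *\<^sub>R y - of_real (m / c)"
      by (simp add: \<theta>_def z_def of_real_diff)
    also have "\<dots> = v * v"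
      by (simp add: vv c_def of_real_def scaleR_diff_right)
    finally show ?thesis .
  qed
  define d :: real where "d = 2 - m / c"
  have d1: "d \<ge> 1" using m1 m0 by (simp add: d_def c_def field_simps)
  define yd where "yd = (1 / (c * d)) *\<^sub>R y"
  have nyd: "norm yd < 1"
  proof -
    have "norm yd = norm y / (c * d)" using d1 by (simp add: yd_def c_def)
    also have "\<dots> < 1" using ny d1 by (simp add: c_def divide_less_eq)
    finally show ?thesis .
  qed
  have syd: "sa yd" unfolding yd_def by (intro sa_scaleR sy)
  define u where "u = sqrt d *\<^sub>R Rs (1/2) yd"
  have su: "sa u" unfolding u_def by (intro sa_scaleR sa_Rs[OF nyd syd])
  have h1: "of_real \<theta> + z = u * u"
  proof -
    have "u * u = (sqrt d * sqrt d) *\<^sub>R (Rs (1/2) yd * Rs (1/2) yd)" unfolding u_def by simp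
    also have "\<dots> = d *\<^sub>R (1 - yd)" using d1 by (simp add: Rs_mult[OF nyd] Rs_one)
    also have "\<dots> = d *\<^sub>R 1 - (d * (1 / (c * d))) *\<^sub>R y"
      by (simp add: yd_def scaleR_diff_right)
    also have "d * (1 / (c * d)) = 1 / c" using d1 by simp
    also have "d *\<^sub>R (1::'a) = of_real \<theta> + 1"
    proof -
      have "of_real \<theta> + (1::'a) = of_real (\<theta> + 1)" by simp
      also have "\<theta> + 1 = d" by (simp add: \<theta>_def d_def)
      finally show ?thesis by (simp add: of_real_def)
    qed
    also have "of_real \<theta> + 1 - (1 / c) *\<^sub>R y = of_real \<theta> + z"
      by (simp add: z_def algebra_simps)
    finally show ?thesis by simp
  qed
  have uv: "u * v = v * u"
  proof -
    have "(k * R1) * y = y * (k * R1)" by (metis ky yR1 mult.assoc)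
    then have "(k * R1) * yd = yd * (k * R1)" unfolding yd_def by simp
    then have "(k * R1) * Rs (1/2) yd = Rs (1/2) yd * (k * R1)" by (rule Rs_commute[OF nyd])
    then show ?thesis unfolding u_def v_def by simp
  qed
  have nz: "norm z \<le> \<theta>" by (rule order_norm[OF sz su sv uv th0 h1 h2])
  have nz1: "norm z < 1" using nz th1 by simp
  \<comment> \<open>square root of y\<close>
  define T where "T = Rs (1/2) z"
  have sT: "sa T" unfolding T_def by (rule sa_Rs[OF nz1 sz])
  have TT: "T * T = 1 - z" unfolding T_def by (simp add: Rs_mult[OF nz1] Rs_one)
  define Q where "Q = Rs (1/4) z"
  have sQ: "sa Q" unfolding Q_def by (rule sa_Rs[OF nz1 sz])
  have QQ: "Q * Q = T" unfolding Q_def T_def by (simp add: Rs_mult[OF nz1])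
  have nT: "norm T < 1"
  proof (rule norm_sa_lt1[OF sT])
    have "norm (T * T) = norm y / c" by (simp add: TT z_def c_def)
    then show "norm (T * T) < 1" using ny by (simp add: c_def)
  qed
  define W where "W = Rs (1/2) T"
  have sW: "sa W" unfolding W_def by (rule sa_Rs[OF nT sT])
  have WW: "W * W = 1 - T" unfolding W_def by (simp add: Rs_mult[OF nT] Rs_one)
  have zQ: "z * Q = Q * z" unfolding Q_def by (rule Rs_commute[OF nz1 refl])
  have QT: "Q * T = T * Q" unfolding T_def by (rule Rs_commute[OF nz1 zQ[symmetric]])
  have QW: "Q * W = W * Q" unfolding W_def by (rule Rs_commute[OF nT QT])
  have nTh: "norm (T - of_real (1/2)) \<le> 1/2"
  proof (rule order_norm[OF _ sQ sW QW])
    show "sa (T - of_real (1/2))" by (intro sa_diff sT sa_of_real)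
    show "of_real (1/2) + (T - of_real (1/2)) = Q * Q" by (simp add: QQ)
    show "of_real (1/2) - (T - of_real (1/2)) = W * W"
      by (simp add: WW of_real_def scaleR_2[symmetric] algebra_simps)
  qed simp
  define r where "r = (5/4) *\<^sub>R T"
  have sr: "sa r" unfolding r_def by (intro sa_scaleR sT)
  have rr: "r * r = y"
  proof -
    have "r * r = (25/16) *\<^sub>R (T * T)" unfolding r_def by simp
    also have "\<dots> = y" by (simp add: TT z_def c_def)
    finally show ?thesis .
  qed
  have kT: "k * T = T * k" unfolding T_def by (rule Rs_commute[OF nz1 kz])
  have jT: "j * T = T * j" unfolding T_def by (rule Rs_commute[OF nz1 jz])
  have kr: "k * r = r * k" and jr: "j * r = r * j" unfolding r_def using kT jT by simp_all
  define s where "s = r * j"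
  have ss: "sa s" unfolding s_def by (rule sa_mult[OF sr sj jr[symmetric]])
  have s2: "s * s = 1"
  proof -
    have "s * s = r * (j * r) * j" unfolding s_def by (simp add: mult.assoc)
    also have "\<dots> = (r * r) * (j * j)" using jr by (simp add: mult.assoc)
    also have "\<dots> = 1" using kkjj by (simp add: rr y_def)
    finally show ?thesis .
  qed
  have sr_k: "s * r = k"
  proof -
    have "s * r = r * (j * r)" unfolding s_def by (simp add: mult.assoc)
    also have "\<dots> = (r * r) * j" using jr by (simp add: mult.assoc)
    also have "\<dots> = k" by (simp add: rr y_def mult.assoc kj)
    finally show ?thesis .
  qed
  have ns: "norm s = 1"
  proof -
    have "(norm s)\<^sup>2 = 1" using norm_sa_square[OF ss] s2 by simp
    then show ?thesis using norm_ge_zero[of s] by (auto simp: power2_eq_1_iff)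
  qed
  have xeq: "k - (1/2) *\<^sub>R s = s * (r - of_real (1/2))"
    by (simp add: algebra_simps sr_k of_real_def)
  have nr: "norm (r - of_real (1/2)) \<le> 3/4"
  proof -
    have e1: "(5/4) *\<^sub>R (T - of_real (1/2)) = (5/4) *\<^sub>R T - of_real (5/8)"
      by (simp add: scaleR_diff_right of_real_def)
    have e2: "(of_real (5/8) :: 'a) = of_real (1/2) + of_real (1/8)"
      by (simp flip: of_real_add)
    have "r - of_real (1/2) = (5/4) *\<^sub>R (T - of_real (1/2)) + of_real (1/8)"
      unfolding e1 e2 r_def by simp
    then have "norm (r - of_real (1/2)) \<le> norm ((5/4) *\<^sub>R (T - of_real (1/2))) + norm (of_real (1/8) :: 'a)"
      by (simp only: norm_triangle_ineq)
    also have "\<dots> = (5/4) * norm (T - of_real (1/2)) + 1/8"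
      by (simp only: norm_scaleR norm_of_real)
    finally have "norm (r - of_real (1/2)) \<le> (5/4) * norm (T - of_real (1/2)) + 1/8" .
    then show ?thesis using nTh by simp
  qed
  have "norm (k - (1/2) *\<^sub>R s) \<le> 3/4"
  proof -
    have "norm (k - (1/2) *\<^sub>R s) \<le> norm s * norm (r - of_real (1/2))"
      unfolding xeq by (rule norm_mult_ineq)
    then show ?thesis using ns nr by simp
  qed
  moreover have "norm (h - k) < \<eta>" using nhk by (simp add: e_def)
  ultimately show ?thesis using sk ss s2 by blast
qed


lemma cs_scale_minus_left: "cs_scale (- c) b = - cs_scale c b"
proof -
  have "cs_scale c b + cs_scale (- c) b = 0"
    using cs_scale_add_left[of c "- c" b] by simp
  then show ?thesis by (rule minus_unique[symmetric])
qed

lemma sa_agree: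
  fixes \<sigma> \<tau> :: "'a::unital_cstar_algebra \<Rightarrow> complex"
  assumes RR0: "real_rank_zero TYPE('a)" and trs: "tracial_state \<sigma>" and trt: "tracial_state \<tau>"
    and P: "\<And>e. cs_star e = e \<Longrightarrow> e * e = e \<Longrightarrow> Re (\<sigma> e) = Re (\<tau> e)"
    and sh0: "sa h0"
  shows "\<sigma> h0 = \<tau> h0"
proof -
  define \<delta> where "\<delta> a = Re (\<sigma> a) - Re (\<tau> a)" for a
  have ddiff: "\<delta> (a - b) = \<delta> a - \<delta> b" for a b
    by (simp add: \<delta>_def tr_diff[OF trs] tr_diff[OF trt])
  have dscale: "\<delta> (r *\<^sub>R a) = r * \<delta> a" for r a
    by (simp add: \<delta>_def tr_scaleR[OF trs] tr_scaleR[OF trt] algebra_simps)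
  have dbound: "\<bar>\<delta> x\<bar> \<le> 2 * norm x" if "sa x" for x
    using tr_bound[OF trs that] tr_bound[OF trt that] unfolding \<delta>_def by linarith
  have d1: "\<delta> 1 = 0" by (simp add: \<delta>_def tr_one[OF trs] tr_one[OF trt])
  have dsym: "\<delta> s = 0" if ss: "sa s" and s2: "s * s = 1" for s
  proof -
    define p where "p = (1/2) *\<^sub>R (1 + s)"
    have sp: "cs_star p = p" unfolding p_def using ss
      by (simp add: sa_def cs_star_scaleR cs_star_add)
    have "(1 + s) * (1 + s) = 2 *\<^sub>R (1 + s)"
      by (simp add: algebra_simps s2 scaleR_2)
    then have pp: "p * p = p" unfolding p_def by simp
    have dp: "\<delta> p = 0" using P[OF sp pp] by (simp add: \<delta>_def)
    have "s = 2 *\<^sub>R p - 1" unfolding p_def by (simp add: algebra_simps)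
    then have "\<delta> s = 2 * \<delta> p - \<delta> 1" by (simp add: ddiff dscale)
    then show ?thesis using dp d1 by simp
  qed
  have step: "\<exists>x. sa x \<and> norm x \<le> 3/4 \<and> \<bar>\<delta> h - \<delta> x\<bar> \<le> 2 * \<eta>"
    if sh: "sa h" and nh: "norm h \<le> 1" and eta: "\<eta> > 0" for h \<eta>
  proof -
    from contraction[OF RR0 sh nh eta] obtain k s where sk: "sa k" and ss: "sa s" and s2: "s * s = 1"
      and nhk: "norm (h - k) < \<eta>" and nx: "norm (k - (1/2) *\<^sub>R s) \<le> 3/4" by blast
    have sx: "sa (k - (1/2) *\<^sub>R s)" by (intro sa_diff sk sa_scaleR ss)
    have "\<delta> (k - (1/2) *\<^sub>R s) = \<delta> k" using dsym[OF ss s2] by (simp add: ddiff dscale)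
    then have "\<delta> h - \<delta> (k - (1/2) *\<^sub>R s) = \<delta> (h - k)" by (simp add: ddiff)
    moreover have "\<bar>\<delta> (h - k)\<bar> \<le> 2 * \<eta>"
      using dbound[OF sa_diff[OF sh sk]] nhk by linarith
    ultimately show ?thesis using sx nx by metis
  qed
  have ind: "\<forall>h. sa h \<and> norm h \<le> 1 \<longrightarrow> \<bar>\<delta> h\<bar> \<le> 2 * (3/4) ^ n" for n
  proof (induction n)
    case 0
    show ?case
    proof (intro allI impI)
      fix h :: 'a assume "sa h \<and> norm h \<le> 1"
      then show "\<bar>\<delta> h\<bar> \<le> 2 * (3/4) ^ 0" using dbound[of h] by auto
    qed
  next
    case (Suc n)
    show ?case
    proof (intro allI impI)
      fix h :: 'a assume "sa h \<and> norm h \<le> 1"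
      then have sh: "sa h" and nh: "norm h \<le> 1" by auto
      show "\<bar>\<delta> h\<bar> \<le> 2 * (3/4) ^ Suc n"
      proof (rule field_le_epsilon)
        fix \<epsilon> :: real assume ep: "0 < \<epsilon>"
        from step[OF sh nh, of "\<epsilon>/2"] ep obtain x where sx: "sa x" and nx: "norm x \<le> 3/4"
          and dx: "\<bar>\<delta> h - \<delta> x\<bar> \<le> \<epsilon>" by auto
        define x' where "x' = (4/3) *\<^sub>R x"
        have sx': "sa x'" unfolding x'_def by (rule sa_scaleR[OF sx])
        have nx': "norm x' \<le> 1" unfolding x'_def using nx by simp
        have "\<bar>\<delta> x'\<bar> \<le> 2 * (3/4) ^ n" using Suc sx' nx' by blast
        moreover have "\<delta> x = (3/4) * \<delta> x'" unfolding x'_def by (simp add: dscale)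
        ultimately have "\<bar>\<delta> x\<bar> \<le> 2 * (3/4) ^ Suc n" by (simp add: abs_mult)
        then show "\<bar>\<delta> h\<bar> \<le> 2 * (3/4) ^ Suc n + \<epsilon>" using dx by linarith
      qed
    qed
  qed
  have d0: "\<delta> h = 0" if sh: "sa h" and nh: "norm h \<le> 1" for h
  proof (rule ccontr)
    assume "\<delta> h \<noteq> 0"
    then have pos: "\<bar>\<delta> h\<bar> / 2 > 0" by simp
    obtain n where "(3/4::real) ^ n < \<bar>\<delta> h\<bar> / 2"
      using real_arch_pow_inv[OF pos, of "3/4"] by auto
    moreover have "\<bar>\<delta> h\<bar> \<le> 2 * (3/4) ^ n" using ind sh nh by blast
    ultimately show False by simp
  qed
  have dall: "\<delta> h = 0" if sh: "sa h" for h
  proof (cases "h = 0")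
    case True then show ?thesis by (simp add: \<delta>_def tr_zero[OF trs] tr_zero[OF trt])
  next
    case False
    define h' where "h' = (1 / norm h) *\<^sub>R h"
    have "sa h'" unfolding h'_def by (rule sa_scaleR[OF sh])
    moreover have "norm h' \<le> 1" unfolding h'_def using False by simp
    ultimately have "\<delta> h' = 0" by (rule d0)
    moreover have "h = norm h *\<^sub>R h'" unfolding h'_def using False by simp
    ultimately show ?thesis by (metis dscale mult_zero_right)
  qed
  show "\<sigma> h0 = \<tau> h0"
  proof (rule complex_eqI)
    show "Re (\<sigma> h0) = Re (\<tau> h0)" using dall[OF sh0] by (simp add: \<delta>_def)
    show "Im (\<sigma> h0) = Im (\<tau> h0)" using tr_bound[OF trs sh0] tr_bound[OF trt sh0] by simp
  qed
qed

lemma all_agree: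
  fixes \<sigma> \<tau> :: "'a::unital_cstar_algebra \<Rightarrow> complex"
  assumes RR0: "real_rank_zero TYPE('a)" and trs: "tracial_state \<sigma>" and trt: "tracial_state \<tau>"
    and P: "\<And>e. cs_star e = e \<Longrightarrow> e * e = e \<Longrightarrow> Re (\<sigma> e) = Re (\<tau> e)"
  shows "\<sigma> a = \<tau> a"
proof -
  define h1 where "h1 = (1/2) *\<^sub>R (a + cs_star a)"
  define h2 where "h2 = cs_scale (- \<i>/2) (a - cs_star a)"
  have s1: "sa h1" unfolding h1_def
    by (simp add: sa_def cs_star_scaleR cs_star_add cs_star_star add.commute)
  have s2: "sa h2"
  proof -
    have "cs_star h2 = cs_scale (\<i>/2) (cs_star a - a)"
      unfolding h2_def by (simp add: cs_star_scale cs_star_diff cs_star_star)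
    also have "cs_star a - a = - (a - cs_star a)" by simp
    also have "cs_scale (\<i>/2) (- (a - cs_star a)) = h2"
      unfolding h2_def minus_divide_left[symmetric] cs_scale_minus_right cs_scale_minus_left by (rule refl)
    finally show ?thesis by (simp add: sa_def)
  qed
  have dec: "a = h1 + cs_scale \<i> h2"
  proof -
    have "cs_scale \<i> h2 = cs_scale (\<i> * (- \<i>/2)) (a - cs_star a)"
      unfolding h2_def by (simp add: cs_scale_scale)
    also have "\<i> * (- \<i>/2) = complex_of_real (1/2)" by (simp add: complex_eq_iff)
    also have "cs_scale (complex_of_real (1/2)) (a - cs_star a) = (1/2) *\<^sub>R (a - cs_star a)"
      by (rule cs_scale_of_real)
    finally have "cs_scale \<i> h2 = (1/2) *\<^sub>R (a - cs_star a)" .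
    then have "h1 + cs_scale \<i> h2 = (1/2) *\<^sub>R (a + cs_star a) + (1/2) *\<^sub>R (a - cs_star a)"
      by (simp add: h1_def)
    also have "\<dots> = (1/2) *\<^sub>R (a + a)" by (simp add: scaleR_add_right[symmetric])
    also have "\<dots> = a" by (simp add: scaleR_2[symmetric])
    finally show ?thesis by simp
  qed
  have "\<sigma> a = \<sigma> h1 + \<i> * \<sigma> h2"
    by (subst dec) (simp add: tr_add[OF trs] tr_scale[OF trs])
  also have "\<dots> = \<tau> h1 + \<i> * \<tau> h2" using sa_agree[OF RR0 trs trt P s1] sa_agree[OF RR0 trs trt P s2] by simp
  also have "\<dots> = \<tau> a"
  proof -
    have "\<tau> (h1 + cs_scale \<i> h2) = \<tau> h1 + \<i> * \<tau> h2" by (simp add: tr_add[OF trt] tr_scale[OF trt])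
    then show ?thesis using dec by simp
  qed
  finally show ?thesis .
qed

theorem lemma4p1:
  fixes \<alpha> :: "'a::unital_cstar_algebra \<Rightarrow> 'a"
    and G :: "('a pmat \<times> 'a pmat) set set"
  assumes "separable_cstar TYPE('a)"
    and "simple_cstar TYPE('a)"
    and "real_rank_zero TYPE('a)"
    and "stable_rank_one TYPE('a)"
    and "star_automorphism \<alpha>"
    and "k0_subgroup G"
    and "\<forall>X\<in>K0 TYPE('a). \<forall>\<epsilon>>0. \<exists>Y\<in>G. \<forall>\<tau>. tracial_state \<tau> \<longrightarrow> \<bar>rho X \<tau> - rho Y \<tau>\<bar> < \<epsilon>"
    and "\<forall>X\<in>G. k0_map \<alpha> X = X"
  shows "\<forall>\<tau>. tracial_state \<tau> \<longrightarrow> (\<forall>a. \<tau> (\<alpha> a) = \<tau> a)"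
proof (intro allI impI)
  fix \<tau> :: "'a \<Rightarrow> complex" and a :: 'a
  assume tr: "tracial_state \<tau>"
  have GK: "G \<subseteq> K0 TYPE('a)" using assms(6) by (simp add: k0_subgroup_def)
  have P: "Re (\<tau> (\<alpha> e)) = Re (\<tau> e)" if "cs_star e = e" "e * e = e" for e
    by (rule proj_invariant[OF tr assms(5) assms(7) GK assms(8) that])
  show "\<tau> (\<alpha> a) = \<tau> a"
    by (rule all_agree[OF assms(3) tracial_comp[OF tr assms(5)] tr P])
qed


end
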